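(* Fix $n\ge1$, $\tau>0$, $\beta\in(0,1)$ and use the notation of the context, with $\bar r=\sqrt{R^2-s^2}$. For $x\in\mathbb{R}^n$ with $|x|\le\beta R$ and $r\in(R-s,R+s)$: \[ \cos\theta(x,r)=\frac{r^2+\bar r^2}{2Rr},\qquad \partial_r\theta(x,r)=-\frac{1}{\sin\theta(x,r)}\cdot\frac{r^2-\bar r^2}{2Rr^2}. \] Moreover $h(x,\cdot)>0$ on $(R-s,R+s)$ and $h=0$ at $r=R\pm s$, and \[ \gamma'(\theta(x,r))\,\partial_r\theta(x,r)=-\frac{1+O(N^{-1})}{4\sqrt{\pi\tau}\,r^2}\,(r^2-\bar r^2)\Big(1-\frac{(r^2+\bar r^2)^2}{8N\tau r^2}\Big)^{\frac{N-3}{2}}, \] where $\gamma'$ is the derivative of $\gamma$ in $\theta$ and $O(N^{-1})$ is bounded by a constant times $N^{-1}$ independent of $N$.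
   Context: For $N\ge3$: $R=\sqrt{2N\tau}$, $\bar y\in\mathbb{R}^N$ with $|\bar y|=R$; for $|x|\le\beta R$, $s=s(x)=\sqrt{\beta^2R^2-|x|^2}$. $\gamma(\theta)=\gamma(N,\theta)$ is the fraction of the volume of $S^{N-1}$ contained in a geodesic ball of radius $\theta\in[0,\pi]$. For $r\in[R-s,R+s]$, the part of the sphere $\{|y|=r\}\subset\mathbb{R}^N$ inside $B_s(\bar y)$ is a spherical cap centered at $r\bar y/R$; $\theta(x,r)$ is its angular radius. $h(x,r)=r\,\gamma(\theta(x,r))$. *)

theory Defs
  imports "HOL-Analysis.Analysis"
begin

text \<open>Points of R^N are represented as functions nat => real; only the coordinates
  0..N-1 matter (norm and inner product only use them). The dimension N is explicit
  because the statement quantifies over N uniformly (the O(N^-1) constant).\<close>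

definition enorm :: "nat \<Rightarrow> (nat \<Rightarrow> real) \<Rightarrow> real" where
  "enorm N y = sqrt (\<Sum>i<N. (y i)\<^sup>2)"

definition einner :: "nat \<Rightarrow> (nat \<Rightarrow> real) \<Rightarrow> (nat \<Rightarrow> real) \<Rightarrow> real" where
  "einner N y z = (\<Sum>i<N. y i * z i)"

abbreviation lebN :: "nat \<Rightarrow> (nat \<Rightarrow> real) measure" where
  "lebN N \<equiv> PiM {..<N} (\<lambda>_. lborel)"

text \<open>gamma(N,theta): fraction of the volume of S^{N-1} lying in a geodesic ball of radius
  theta (centred at e_0). Normalised surface measure on the sphere is realised as the
  normalised cone measure: a subset A of the sphere gets the Lebesgue measure of
  {t u : 0 < t <= 1, u in A} divided by the volume of the unit ball. The geodesic distance
  from e_0 to y/|y| is arccos (y_0/|y|).\<close>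
definition sph_cone :: "nat \<Rightarrow> real \<Rightarrow> (nat \<Rightarrow> real) set" where
  "sph_cone N \<theta> = {y \<in> space (lebN N). 0 < enorm N y \<and> enorm N y \<le> 1 \<and>
       arccos (y 0 / enorm N y) \<le> \<theta>}"

definition sph_frac :: "nat \<Rightarrow> real \<Rightarrow> real" where
  "sph_frac N \<theta> = measure (lebN N) (sph_cone N \<theta>) /
                    measure (lebN N) {y \<in> space (lebN N). enorm N y \<le> 1}"

text \<open>Angular radius of the spherical cap {|y| = r} \<inter> closed ball B_s(ybar), centred at
  r ybar / |ybar|: the largest angle between a point of the cap and ybar.\<close>
definition cap_angle :: "nat \<Rightarrow> (nat \<Rightarrow> real) \<Rightarrow> real \<Rightarrow> real \<Rightarrow> real" where
  "cap_angle N ybar s r =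
     Sup ((\<lambda>y. arccos (einner N y ybar / (enorm N y * enorm N ybar))) `
          {y. enorm N y = r \<and> enorm N (\<lambda>i. y i - ybar i) \<le> s})"

definition Rrad :: "nat \<Rightarrow> real \<Rightarrow> real" where
  "Rrad N \<tau> = sqrt (2 * real N * \<tau>)"

definition sval :: "nat \<Rightarrow> real \<Rightarrow> real \<Rightarrow> nat \<Rightarrow> (nat \<Rightarrow> real) \<Rightarrow> real" where
  "sval N \<tau> \<beta> n x = sqrt (\<beta>\<^sup>2 * (Rrad N \<tau>)\<^sup>2 - (enorm n x)\<^sup>2)"

definition rbar :: "nat \<Rightarrow> real \<Rightarrow> real \<Rightarrow> nat \<Rightarrow> (nat \<Rightarrow> real) \<Rightarrow> real" where
  "rbar N \<tau> \<beta> n x = sqrt ((Rrad N \<tau>)\<^sup>2 - (sval N \<tau> \<beta> n x)\<^sup>2)"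

definition theta :: "nat \<Rightarrow> real \<Rightarrow> real \<Rightarrow> nat \<Rightarrow> (nat \<Rightarrow> real) \<Rightarrow> (nat \<Rightarrow> real) \<Rightarrow> real \<Rightarrow> real" where
  "theta N \<tau> \<beta> n x ybar r = cap_angle N ybar (sval N \<tau> \<beta> n x) r"

definition hfun :: "nat \<Rightarrow> real \<Rightarrow> real \<Rightarrow> nat \<Rightarrow> (nat \<Rightarrow> real) \<Rightarrow> (nat \<Rightarrow> real) \<Rightarrow> real \<Rightarrow> real" where
  "hfun N \<tau> \<beta> n x ybar r = r * sph_frac N (theta N \<tau> \<beta> n x ybar r)"

definition setting :: "nat \<Rightarrow> nat \<Rightarrow> real \<Rightarrow> real \<Rightarrow> (nat \<Rightarrow> real) \<Rightarrow> (nat \<Rightarrow> real) \<Rightarrow> bool" where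
  "setting N n \<tau> \<beta> x ybar \<longleftrightarrow> 3 \<le> N \<and> 1 \<le> n \<and> 0 < \<tau> \<and> 0 < \<beta> \<and> \<beta> < 1 \<and>
     enorm N ybar = Rrad N \<tau> \<and> enorm n x \<le> \<beta> * Rrad N \<tau>"

end

theory Submission
  imports Defs
begin


definition W :: "nat \<Rightarrow> real" where "W k = integral {0..pi} (\<lambda>x. sin x ^ k)"

lemma sin_pow_int: "((\<lambda>x::real. sin x ^ k) has_integral integral {a..b} (\<lambda>x. sin x ^ k)) {a..b}"
  by (intro integrable_integral integrable_continuous_interval continuous_intros)

lemma W_rec: "W (k+2) = (real k + 1) / (real k + 2) * W k"
proof -
  let ?F = "\<lambda>x::real. - (sin x ^ (k+1) * cos x)"
  let ?f = "\<lambda>x::real. (real k + 2) * sin x ^ (k+2) - (real k + 1) * sin x ^ k"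
  have d: "(?F has_vector_derivative ?f x) (at x within {0..pi})" for x
  proof -
    have p: "((\<lambda>x. sin x ^ (k+1)) has_real_derivative (real (k+1) * (cos x * sin x ^ k))) (at x within {0..pi})"
      using DERIV_power[OF DERIV_sin[of x], of "k+1"] has_field_derivative_at_within by simp
    have "(?F has_real_derivative (- ((real (k+1)) * sin x ^ k * cos x * cos x + sin x ^ (k+1) * (- sin x)))) (at x within {0..pi})"
      using DERIV_minus[OF DERIV_mult[OF p DERIV_cos[THEN has_field_derivative_at_within]]] by (simp add: algebra_simps)
    moreover have "- ((real (k+1)) * sin x ^ k * cos x * cos x + sin x ^ (k+1) * (- sin x)) = ?f x"
    proof -
      have c: "cos x * cos x = 1 - sin x * sin x" using sin_cos_squared_add[of x] by (simp add: power2_eq_square)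
      have p1: "sin x ^ (k+1) = sin x ^ k * sin x" "sin x ^ (k+2) = sin x ^ k * sin x * sin x"
        by (simp_all add: power_add power2_eq_square)
      have "- ((real (k+1)) * sin x ^ k * cos x * cos x + sin x ^ (k+1) * (- sin x))
          = - ((real k + 1) * sin x ^ k * (cos x * cos x) - sin x ^ k * sin x * sin x)"
        unfolding p1 by (simp add: algebra_simps)
      also have "\<dots> = ?f x" unfolding c p1 by (simp add: algebra_simps)
      finally show ?thesis .
    qed
    ultimately show ?thesis by (simp add: has_real_derivative_iff_has_vector_derivative)
  qed
  have "(?f has_integral (?F pi - ?F 0)) {0..pi}"
    by (rule fundamental_theorem_of_calculus) (use d in auto)
  hence "(?f has_integral 0) {0..pi}" by simp
  moreover have "(?f has_integral ((real k + 2) * W (k+2) - (real k + 1) * W k)) {0..pi}"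
    unfolding W_def by (intro has_integral_diff has_integral_mult_right sin_pow_int)
  ultimately have "(real k + 2) * W (k+2) - (real k + 1) * W k = 0" using has_integral_unique by blast
  thus ?thesis by (simp add: field_simps)
qed

lemma W0: "W 0 = pi" unfolding W_def by simp

lemma W1: "W (Suc 0) = 2"
proof -
  have "((\<lambda>x. sin x) has_integral (- cos pi - - cos 0)) {0..pi}"
    by (rule fundamental_theorem_of_calculus) (auto intro!: derivative_eq_intros simp: has_real_derivative_iff_has_vector_derivative[symmetric])
  thus ?thesis by (simp add: W_def integral_unique)
qed

lemma W_nonneg: "0 \<le> W k"
  unfolding W_def by (intro integral_nonneg integrable_continuous_real continuous_intros) (auto simp: sin_ge_zero)

lemma W_mono: "W (Suc k) \<le> W k"
  unfolding W_def
proof (intro integral_le integrable_continuous_real continuous_intros)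
  fix x assume "x \<in> {0..pi}"
  hence "0 \<le> sin x" "sin x \<le> 1" by (auto simp: sin_ge_zero)
  thus "sin x ^ Suc k \<le> sin x ^ k" by (simp add: mult_left_le_one_le)
qed

lemma W_prod: "(real k + 1) * W (Suc k) * W k = 2 * pi"
proof (induction k)
  case 0 thus ?case by (simp add: W0 W1)
next
  case (Suc k)
  have "(real (Suc k) + 1) * W (Suc (Suc k)) * W (Suc k) = (real k + 1) * W (Suc k) * W k"
    using W_rec[of k] by (simp add: field_simps)
  thus ?case using Suc by simp
qed

lemma W_bounds: assumes "1 \<le> k" shows "2*pi/(real k + 1) \<le> (W k)^2" "(W k)^2 \<le> 2*pi/ real k"
proof -
  have a: "(real k + 1) * W (Suc k) * W k = 2*pi" by (rule W_prod)
  obtain j where j: "k = Suc j" using assms by (cases k) auto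
  have b: "real k * W k * W j = 2*pi" using W_prod[of j] j by (simp add: add.commute)
  have "W (Suc k) * W k \<le> W k * W k" using W_mono[of k] W_nonneg[of k] by (simp add: mult_right_mono)
  hence "(real k + 1) * (W (Suc k) * W k) \<le> (real k + 1) * (W k * W k)" by (rule mult_left_mono) auto
  moreover have "(real k + 1) * (W (Suc k) * W k) = 2*pi" using a by (simp add: mult.assoc)
  ultimately have "2*pi \<le> (real k + 1) * (W k)^2" by (simp add: power2_eq_square)
  thus "2*pi/(real k + 1) \<le> (W k)^2" by (simp add: divide_le_eq mult.commute)
  have "W k * W k \<le> W k * W j" using mult_left_mono[OF W_mono[of j] W_nonneg[of k]] j by simp
  hence "real k * (W k * W k) \<le> real k * (W k * W j)" by (rule mult_left_mono) auto
  moreover have "real k * (W k * W j) = 2*pi" using b by (simp add: mult.assoc)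
  ultimately have "real k * (W k)^2 \<le> 2*pi" by (simp add: power2_eq_square)
  thus "(W k)^2 \<le> 2*pi/real k" using assms by (simp add: le_divide_eq mult.commute)
qed



lemma integral_Icc_null: "b \<le> a \<Longrightarrow> integral {a..b} (f::real\<Rightarrow>real) = 0"
  using integral_null[of a b f] by (simp add: content_real_eq_0)

lemma sqrt_sin_cos: "x \<in> {0..pi} \<Longrightarrow> sqrt (1 - (cos x)\<^sup>2) = sin x"
proof -
  assume "x \<in> {0..pi}"
  hence "0 \<le> sin x" by (auto simp: sin_ge_zero)
  moreover have "1 - (cos x)\<^sup>2 = (sin x)\<^sup>2" by (simp add: sin_squared_eq)
  ultimately show ?thesis by simp
qed

lemma subst_int:
  assumes "0 \<le> \<theta>" "\<theta> \<le> pi"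
  shows "((\<lambda>t. sqrt (1 - t\<^sup>2) ^ m) has_integral integral {0..\<theta>} (\<lambda>x. sin x ^ (m+1))) {cos \<theta>..1}"
proof -
  let ?f = "\<lambda>t::real. sqrt (1 - t\<^sup>2) ^ m"
  have "((\<lambda>x. (- sin x) *\<^sub>R ?f (cos x)) has_integral (integral {cos 0..cos \<theta>} ?f - integral {cos \<theta>..cos 0} ?f)) {0..\<theta>}"
  proof (rule has_integral_substitution_general[of "{}" 0 \<theta> cos "-1" 1])
    show "continuous_on {- 1..1} ?f" by (intro continuous_intros)
    show "continuous_on {0..\<theta>} cos" by (intro continuous_intros)
    show "cos ` {0..\<theta>} \<subseteq> {- 1..1}" by auto
    show "(cos has_real_derivative - sin x) (at x within {0..\<theta>})" for x
      by (rule has_field_derivative_at_within[OF DERIV_cos])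
  qed (use assms in auto)
  hence h2: "((\<lambda>x. (- sin x) *\<^sub>R ?f (cos x)) has_integral (- integral {cos \<theta>..1} ?f)) {0..\<theta>}"
    by (simp add: integral_Icc_null)
  have "((\<lambda>x. - ((- sin x) *\<^sub>R ?f (cos x))) has_integral (integral {cos \<theta>..1} ?f)) {0..\<theta>}"
    using has_integral_neg[OF h2] by simp
  moreover have "- ((- sin x) *\<^sub>R ?f (cos x)) = sin x ^ (m+1)" if "x \<in> {0..\<theta>}" for x
    using sqrt_sin_cos[of x] that assms by simp
  ultimately have "((\<lambda>x. sin x ^ (m+1)) has_integral (integral {cos \<theta>..1} ?f)) {0..\<theta>}"
    using has_integral_cong by (metis (no_types, lifting))
  hence "integral {0..\<theta>} (\<lambda>x. sin x ^ (m+1)) = integral {cos \<theta>..1} ?f" by (rule integral_unique)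
  moreover have "(?f has_integral integral {cos \<theta>..1} ?f) {cos \<theta>..1}"
    by (intro integrable_integral integrable_continuous_interval continuous_intros)
  ultimately show ?thesis by simp
qed

lemma den_int: "((\<lambda>t. sqrt (1 - t\<^sup>2) ^ m) has_integral W (m+1)) {-1..1}"
  using subst_int[of pi m] unfolding W_def by simp

definition rho :: "real \<Rightarrow> real \<Rightarrow> real" where
  "rho \<theta> t = sqrt (min (1 - t\<^sup>2) ((t * (sin \<theta> / cos \<theta>))\<^sup>2))"

lemma num_int:
  assumes "0 \<le> \<theta>" "\<theta> < pi/2"
  shows "((\<lambda>t. rho \<theta> t ^ m) has_integral
           (sin \<theta> ^ m * cos \<theta> / (real m + 1) + integral {0..\<theta>} (\<lambda>x. sin x ^ (m+1)))) {0..1}"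
proof -
  define c where "c = cos \<theta>"
  define T where "T = sin \<theta> / cos \<theta>"
  have c0: "0 < c" unfolding c_def using assms by (intro cos_gt_zero_pi) auto
  have c1: "c \<le> 1" unfolding c_def by simp
  have s0: "0 \<le> sin \<theta>" using sin_ge_zero[of \<theta>] assms by auto
  have T0: "0 \<le> T" unfolding T_def using s0 c0 c_def by simp
  have sc: "(sin \<theta>)\<^sup>2 + c\<^sup>2 = 1" unfolding c_def by simp
  have r1: "rho \<theta> t = t * T" if "t \<in> {0..c}" for t
  proof -
    have "(t * T)\<^sup>2 \<le> 1 - t\<^sup>2"
    proof -
      have "(t * T)\<^sup>2 + t\<^sup>2 = t\<^sup>2 * ((sin \<theta>)\<^sup>2 + c\<^sup>2) / c\<^sup>2"
        using c0 unfolding T_def c_def[symmetric] by (simp add: field_simps power2_eq_square)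
      also have "\<dots> = t\<^sup>2 / c\<^sup>2" using sc by simp
      finally have "(t * T)\<^sup>2 + t\<^sup>2 = t\<^sup>2 / c\<^sup>2" .
      also have "\<dots> \<le> 1" using that c0 by (simp add: power_le_one_iff divide_le_eq power_mono)
      finally show ?thesis by simp
    qed
    hence "min (1 - t\<^sup>2) ((t * T)\<^sup>2) = (t * T)\<^sup>2" by simp
    thus ?thesis using that T0 unfolding rho_def T_def[symmetric] by simp
  qed
  have r2: "rho \<theta> t = sqrt (1 - t\<^sup>2)" if "t \<in> {c..1}" for t
  proof -
    have "1 - t\<^sup>2 \<le> (t * T)\<^sup>2"
    proof -
      have "(t * T)\<^sup>2 + t\<^sup>2 = t\<^sup>2 * ((sin \<theta>)\<^sup>2 + c\<^sup>2) / c\<^sup>2"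
        using c0 unfolding T_def c_def[symmetric] by (simp add: field_simps power2_eq_square)
      also have "\<dots> = t\<^sup>2 / c\<^sup>2" using sc by simp
      finally have "(t * T)\<^sup>2 + t\<^sup>2 = t\<^sup>2 / c\<^sup>2" .
      moreover have "1 \<le> t\<^sup>2 / c\<^sup>2" using that c0 by (simp add: le_divide_eq power_mono)
      ultimately show ?thesis by simp
    qed
    hence "min (1 - t\<^sup>2) ((t * T)\<^sup>2) = 1 - t\<^sup>2" by simp
    thus ?thesis unfolding rho_def T_def[symmetric] by simp
  qed
  have i1: "((\<lambda>t. rho \<theta> t ^ m) has_integral (sin \<theta> ^ m * cos \<theta> / (real m + 1))) {0..c}"
  proof -
    let ?G = "\<lambda>t. T ^ m * t ^ (m+1) / (real m + 1)"
    have "((\<lambda>t. (t * T) ^ m) has_integral (?G c - ?G 0)) {0..c}"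
    proof (rule fundamental_theorem_of_calculus)
      show "0 \<le> c" using c0 by simp
      fix x :: real
      have "(?G has_real_derivative (T ^ m * (real (m+1) * x ^ (m+1 - Suc 0)) / (real m + 1))) (at x within {0..c})"
        by (intro DERIV_cdivide DERIV_cmult DERIV_pow)
      hence "(?G has_real_derivative (T ^ m * (real (m+1) * x ^ m) / (real m + 1))) (at x within {0..c})"
        by simp
      moreover have "T ^ m * (real (m+1) * x ^ m) / (real m + 1) = (x * T) ^ m"
      proof -
        have "real (m+1) = real m + 1" by simp
        hence "T ^ m * (real (m+1) * x ^ m) / (real m + 1) = T ^ m * x ^ m"
          by (simp add: field_simps)
        thus ?thesis by (simp add: power_mult_distrib mult.commute)
      qed
      ultimately show "(?G has_vector_derivative (x * T) ^ m) (at x within {0..c})"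
        by (simp add: has_real_derivative_iff_has_vector_derivative)
    qed
    moreover have "?G c - ?G 0 = sin \<theta> ^ m * cos \<theta> / (real m + 1)"
      using c0 unfolding T_def c_def[symmetric] by (simp add: power_divide field_simps)
    ultimately show ?thesis using r1 by (metis (no_types, lifting) has_integral_cong)
  qed
  have i2: "((\<lambda>t. rho \<theta> t ^ m) has_integral integral {0..\<theta>} (\<lambda>x. sin x ^ (m+1))) {c..1}"
  proof -
    have "\<theta> \<le> pi" using assms by simp
    hence "((\<lambda>t. sqrt (1 - t\<^sup>2) ^ m) has_integral integral {0..\<theta>} (\<lambda>x. sin x ^ (m+1))) {c..1}"
      using subst_int[of \<theta> m] assms unfolding c_def by simp
    thus ?thesis using r2 has_integral_cong[of "{c..1}" "\<lambda>t. rho \<theta> t ^ m" "\<lambda>t. sqrt (1 - t\<^sup>2) ^ m"] by simp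
  qed
  show ?thesis using has_integral_combine[OF _ c1 i1 i2] c0 by simp
qed



lemma ins0: "1 \<le> N \<Longrightarrow> {..<N} = insert (0::nat) {1..<N}" by auto

lemma enorm_split: "1 \<le> N \<Longrightarrow> enorm N y = sqrt ((y 0)\<^sup>2 + (\<Sum>i\<in>{1..<N}. (y i)\<^sup>2))"
  unfolding enorm_def by (subst ins0) auto

lemma enorm_meas: "(\<lambda>y. enorm N y) \<in> borel_measurable (lebN N)"
  unfolding enorm_def by measurable

lemma comp0_meas: "1 \<le> N \<Longrightarrow> (\<lambda>y. y 0) \<in> borel_measurable (lebN N)"
  using measurable_component_singleton[of 0 "{..<N}" "\<lambda>_. lborel"] by simp

lemma ball_meas:
  fixes A :: "'a set"
  assumes "finite A" "A \<noteq> {}" "0 \<le> r"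
  shows "emeasure (Pi\<^sub>M A (\<lambda>_. lborel)) ({f. sqrt (\<Sum>i\<in>A. (f i)\<^sup>2) \<le> r} \<inter> space (Pi\<^sub>M A (\<lambda>_. lborel))) =
         ennreal (unit_ball_vol (real (card A)) * r ^ card A)"
proof (cases "r = 0")
  case False
  thus ?thesis using emeasure_cball_aux[OF assms(1)] assms by simp
next
  case True
  have cA: "card A > 0" using assms by (simp add: card_gt_0_iff)
  have sub: "{f. sqrt (\<Sum>i\<in>A. (f i)\<^sup>2) \<le> r} \<inter> space (Pi\<^sub>M A (\<lambda>_. lborel)) \<subseteq> PiE A (\<lambda>_. {0})"
  proof
    fix f assume f: "f \<in> {f. sqrt (\<Sum>i\<in>A. (f i)\<^sup>2) \<le> r} \<inter> space (Pi\<^sub>M A (\<lambda>_. lborel))"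
    hence "(\<Sum>i\<in>A. (f i)\<^sup>2) \<le> 0" using True by simp
    hence "(\<Sum>i\<in>A. (f i)\<^sup>2) = 0" by (meson order.antisym sum_nonneg zero_le_power2)
    hence "\<forall>i\<in>A. (f i)\<^sup>2 = 0" using assms(1) by (simp add: sum_nonneg_eq_0_iff)
    thus "f \<in> PiE A (\<lambda>_. {0})" using f by (auto simp: space_PiM PiE_iff extensional_def fun_eq_iff restrict_def)
  qed
  have ps: "product_sigma_finite (\<lambda>_::'a. lborel :: real measure)"
    by (simp add: product_sigma_finite_def lborel.sigma_finite_measure_axioms)
  have "emeasure (Pi\<^sub>M A (\<lambda>_. lborel)) (PiE A (\<lambda>_. {0::real})) = (\<Prod>i\<in>A. emeasure lborel {0::real})"
    by (rule product_sigma_finite.emeasure_PiM[OF ps]) (use assms in auto)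
  also have "\<dots> = 0"
  proof -
    have z: "emeasure lborel {0::real} = 0" by simp
    show ?thesis unfolding z using cA by simp
  qed
  finally have e0: "emeasure (Pi\<^sub>M A (\<lambda>_. lborel)) (PiE A (\<lambda>_. {0::real})) = 0" .
  have "PiE A (\<lambda>_. {0::real}) \<in> sets (Pi\<^sub>M A (\<lambda>_. lborel))"
    by (rule sets_PiM_I_finite) (use assms in auto)
  from emeasure_mono[OF sub this] e0
  have "emeasure (Pi\<^sub>M A (\<lambda>_. lborel)) ({f. sqrt (\<Sum>i\<in>A. (f i)\<^sup>2) \<le> r} \<inter> space (Pi\<^sub>M A (\<lambda>_. lborel))) \<le> 0"
    by simp
  thus ?thesis using True cA by simp
qed


lemma slice_measure:
  fixes P :: "real \<Rightarrow> real \<Rightarrow> bool" and T :: "real set" and \<rho> :: "real \<Rightarrow> real"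
  assumes N: "2 \<le> N"
    and meas: "{y \<in> space (lebN N). P (y 0) (\<Sum>i\<in>{1..<N}. (y i)\<^sup>2)} \<in> sets (lebN N)"
    and iff: "\<And>t u. 0 \<le> u \<Longrightarrow> P t u \<longleftrightarrow> (t \<in> T \<and> sqrt u \<le> \<rho> t)"
    and rho0: "\<And>t. t \<in> T \<Longrightarrow> 0 \<le> \<rho> t"
  shows "emeasure (lebN N) {y \<in> space (lebN N). P (y 0) (\<Sum>i\<in>{1..<N}. (y i)\<^sup>2)} =
         (\<integral>\<^sup>+t. indicator T t * ennreal (unit_ball_vol (real (N-1)) * \<rho> t ^ (N-1)) \<partial>lborel)"
proof -
  define A where "A = {1..<N}"
  have A: "finite A" "0 \<notin> A" "A \<noteq> {}" "card A = N - 1" using N by (auto simp: A_def)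
  have ins: "{..<N} = insert 0 A" using N by (auto simp: A_def)
  define S where "S = {y \<in> space (lebN N). P (y 0) (\<Sum>i\<in>A. (y i)\<^sup>2)}"
  have S: "S \<in> sets (Pi\<^sub>M (insert 0 A) (\<lambda>_. lborel))" using meas unfolding S_def A_def[symmetric] ins .
  interpret product_sigma_finite "\<lambda>_::nat. lborel :: real measure" by standard
  have "emeasure (lebN N) S = emeasure (Pi\<^sub>M (insert 0 A) (\<lambda>_. lborel)) S" by (simp only: ins)
  also have "\<dots> = (\<integral>\<^sup>+y. indicator S y \<partial>Pi\<^sub>M (insert 0 A) (\<lambda>_. lborel))"
    using S by (simp add: nn_integral_indicator)
  also have "\<dots> = (\<integral>\<^sup>+t. \<integral>\<^sup>+z. indicator S (z(0:=t)) \<partial>Pi\<^sub>M A (\<lambda>_. lborel) \<partial>lborel)"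
    using A S by (subst product_nn_integral_insert_rev) auto
  also have "\<dots> = (\<integral>\<^sup>+t. \<integral>\<^sup>+z. indicator T t * indicator ({f. sqrt (\<Sum>i\<in>A. (f i)\<^sup>2) \<le> \<rho> t} \<inter> space (Pi\<^sub>M A (\<lambda>_. lborel))) z \<partial>Pi\<^sub>M A (\<lambda>_. lborel) \<partial>lborel)"
  proof (intro nn_integral_cong)
    fix t z assume z: "z \<in> space (Pi\<^sub>M A (\<lambda>_. lborel :: real measure))"
    have zs: "z(0:=t) \<in> space (lebN N)" using z A unfolding ins by (auto simp: space_PiM PiE_iff extensional_def)
    have sum: "(\<Sum>i\<in>A. ((z(0:=t)) i)\<^sup>2) = (\<Sum>i\<in>A. (z i)\<^sup>2)" using A by (intro sum.cong) auto
    have u: "0 \<le> (\<Sum>i\<in>A. (z i)\<^sup>2)" by (simp add: sum_nonneg)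
    show "indicator S (z(0:=t)) = (indicator T t * indicator ({f. sqrt (\<Sum>i\<in>A. (f i)\<^sup>2) \<le> \<rho> t} \<inter> space (Pi\<^sub>M A (\<lambda>_. lborel))) z :: ennreal)"
      using zs z iff[OF u, of t] sum by (auto simp: S_def indicator_def)
  qed
  also have "\<dots> = (\<integral>\<^sup>+t. indicator T t * emeasure (Pi\<^sub>M A (\<lambda>_. lborel)) ({f. sqrt (\<Sum>i\<in>A. (f i)\<^sup>2) \<le> \<rho> t} \<inter> space (Pi\<^sub>M A (\<lambda>_. lborel))) \<partial>lborel)"
    using A by (intro nn_integral_cong) (simp add: nn_integral_cmult nn_integral_indicator)
  also have "\<dots> = (\<integral>\<^sup>+t. indicator T t * ennreal (unit_ball_vol (real (N-1)) * \<rho> t ^ (N-1)) \<partial>lborel)"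
  proof (intro nn_integral_cong)
    fix t show "indicator T t * emeasure (Pi\<^sub>M A (\<lambda>_. lborel)) ({f. sqrt (\<Sum>i\<in>A. (f i)\<^sup>2) \<le> \<rho> t} \<inter> space (Pi\<^sub>M A (\<lambda>_. lborel)))
       = indicator T t * ennreal (unit_ball_vol (real (N-1)) * \<rho> t ^ (N-1))"
      using ball_meas[OF A(1,3) rho0[of t]] A by (cases "t \<in> T") auto
  qed
  finally show ?thesis unfolding S_def A_def .
qed



declare enorm_meas[measurable]

lemma arccos_le_iff:
  assumes "-1 \<le> v" "v \<le> 1" "0 \<le> \<theta>" "\<theta> \<le> pi"
  shows "arccos v \<le> \<theta> \<longleftrightarrow> cos \<theta> \<le> v"
proof -
  have "arccos v \<le> \<theta> \<longleftrightarrow> cos \<theta> \<le> cos (arccos v)"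
    using assms by (intro cos_mono_le_eq[symmetric]) (auto intro: arccos_lbound arccos_ubound)
  thus ?thesis using assms by (simp add: cos_arccos)
qed

lemma cone_iff:
  assumes th: "0 \<le> \<theta>" "\<theta> < pi/2" and u: "0 \<le> u"
  shows "(0 < sqrt (t\<^sup>2 + u) \<and> sqrt (t\<^sup>2 + u) \<le> 1 \<and> cos \<theta> * sqrt (t\<^sup>2 + u) \<le> t) \<longleftrightarrow>
         (t \<in> {0<..1} \<and> sqrt u \<le> rho \<theta> t)"
proof -
  define c where "c = cos \<theta>"
  define s where "s = sin \<theta>"
  define e where "e = sqrt (t\<^sup>2 + u)"
  have c0: "0 < c" unfolding c_def using th by (intro cos_gt_zero_pi) auto
  have sc: "s\<^sup>2 = 1 - c\<^sup>2" unfolding s_def c_def by (simp add: sin_squared_eq)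
  have tu: "0 \<le> t\<^sup>2 + u" using u zero_le_power2[of t] by linarith
  have e2: "e\<^sup>2 = t\<^sup>2 + u" unfolding e_def using tu by simp
  have e0: "0 \<le> e" unfolding e_def using tu by simp
  have rho: "sqrt u \<le> rho \<theta> t \<longleftrightarrow> u \<le> 1 - t\<^sup>2 \<and> u \<le> (t * (s / c))\<^sup>2"
    unfolding rho_def s_def c_def by simp
  have key: "c * e \<le> t \<longleftrightarrow> u \<le> (t * (s / c))\<^sup>2" if t0: "0 \<le> t"
  proof -
    have "c * e \<le> t \<longleftrightarrow> (c * e)\<^sup>2 \<le> t\<^sup>2"
      using t0 c0 e0 by (simp add: abs_le_square_iff[symmetric])
    also have "\<dots> \<longleftrightarrow> c\<^sup>2 * (t\<^sup>2 + u) \<le> t\<^sup>2" by (simp add: power_mult_distrib e2)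
    also have "\<dots> \<longleftrightarrow> u * c\<^sup>2 \<le> t\<^sup>2 * s\<^sup>2" by (simp add: sc algebra_simps)
    also have "\<dots> \<longleftrightarrow> u \<le> (t * (s / c))\<^sup>2"
      using c0 by (simp add: power_mult_distrib power_divide le_divide_eq)
    finally show ?thesis .
  qed
  show ?thesis
  proof
    assume L: "0 < sqrt (t\<^sup>2 + u) \<and> sqrt (t\<^sup>2 + u) \<le> 1 \<and> cos \<theta> * sqrt (t\<^sup>2 + u) \<le> t"
    hence L': "0 < e" "e \<le> 1" "c * e \<le> t" unfolding e_def c_def by auto
    have t0: "0 < t" using L' c0 by (smt (verit) mult_pos_pos)
    have "t\<^sup>2 + u \<le> 1" using L' e2 e0 by (metis power_le_one)
    hence "t\<^sup>2 \<le> 1" "u \<le> 1 - t\<^sup>2" using u by auto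
    hence "t \<le> 1" using t0 by (simp add: power_le_one_iff)
    thus "t \<in> {0<..1} \<and> sqrt u \<le> rho \<theta> t"
      using t0 key L' \<open>u \<le> 1 - t\<^sup>2\<close> rho by auto
  next
    assume R: "t \<in> {0<..1} \<and> sqrt u \<le> rho \<theta> t"
    hence t0: "0 < t" "t \<le> 1" and u1: "u \<le> 1 - t\<^sup>2" and u2: "u \<le> (t * (s / c))\<^sup>2"
      using rho by auto
    have "0 < t\<^sup>2 + u" using t0 u by (simp add: add_pos_nonneg)
    hence "0 < e" unfolding e_def by simp
    moreover have "e \<le> 1" unfolding e_def using u1 by simp
    moreover have "c * e \<le> t" using key u2 t0 by simp
    ultimately show "0 < sqrt (t\<^sup>2 + u) \<and> sqrt (t\<^sup>2 + u) \<le> 1 \<and> cos \<theta> * sqrt (t\<^sup>2 + u) \<le> t"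
      unfolding e_def c_def by simp
  qed
qed


lemma rho_nonneg: "0 \<le> t \<Longrightarrow> t \<le> 1 \<Longrightarrow> 0 \<le> rho \<theta> t"
proof -
  assume "0 \<le> t" "t \<le> 1"
  hence "t\<^sup>2 \<le> 1" by (simp add: power_le_one)
  thus ?thesis unfolding rho_def by simp
qed

lemma rho_meas: "(\<lambda>t. indicator {0..1} t * ennreal (rho \<theta> t ^ m)) \<in> borel_measurable lborel"
  unfolding rho_def by measurable

abbreviation "Vb N \<equiv> unit_ball_vol (real (N - 1))"

lemma ball_emeasure:
  assumes N: "2 \<le> N"
  shows "emeasure (lebN N) {y \<in> space (lebN N). enorm N y \<le> 1} = ennreal (Vb N * W N)"
proof -
  have eq: "{y \<in> space (lebN N). enorm N y \<le> 1} =
      {y \<in> space (lebN N). sqrt ((y 0)\<^sup>2 + (\<Sum>i\<in>{1..<N}. (y i)\<^sup>2)) \<le> 1}"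
    using enorm_split N by auto
  have meas: "{y \<in> space (lebN N). enorm N y \<le> 1} \<in> sets (lebN N)" by measurable
  have iff: "sqrt (t\<^sup>2 + u) \<le> 1 \<longleftrightarrow> (t \<in> {-1..1} \<and> sqrt u \<le> sqrt (1 - t\<^sup>2))" if u: "0 \<le> u" for t u :: real
  proof -
    have "sqrt (t\<^sup>2 + u) \<le> 1 \<longleftrightarrow> t\<^sup>2 + u \<le> 1" by simp
    also have "\<dots> \<longleftrightarrow> (t\<^sup>2 \<le> 1 \<and> u \<le> 1 - t\<^sup>2)" using u by auto
    also have "\<dots> \<longleftrightarrow> (t \<in> {-1..1} \<and> sqrt u \<le> sqrt (1 - t\<^sup>2))"
      by (auto simp: abs_square_le_1 abs_le_iff)
    finally show ?thesis .
  qed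
  have "emeasure (lebN N) {y \<in> space (lebN N). enorm N y \<le> 1} =
     (\<integral>\<^sup>+t. indicator {-1..1} t * ennreal (Vb N * sqrt (1 - t\<^sup>2) ^ (N-1)) \<partial>lborel)"
    unfolding eq
    by (rule slice_measure[where P = "\<lambda>t u. sqrt (t\<^sup>2 + u) \<le> 1"])
       (use N meas eq iff in \<open>auto simp: abs_square_le_1 abs_le_iff\<close>)
  also have "\<dots> = (\<integral>\<^sup>+t. ennreal (Vb N) * (indicator {-1..1} t * ennreal (sqrt (1 - t\<^sup>2) ^ (N-1))) \<partial>lborel)"
  proof (intro nn_integral_cong)
    fix t :: real
    show "indicator {-1..1} t * ennreal (Vb N * sqrt (1 - t\<^sup>2) ^ (N-1)) = ennreal (Vb N) * (indicator {-1..1} t * ennreal (sqrt (1 - t\<^sup>2) ^ (N-1)))"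
    proof (cases "t \<in> {-1..1}")
      case True
      hence "0 \<le> 1 - t\<^sup>2" by (simp add: abs_square_le_1 abs_le_iff)
      thus ?thesis using True by (simp add: ennreal_mult)
    qed simp
  qed
  also have "\<dots> = ennreal (Vb N) * (\<integral>\<^sup>+t. indicator {-1..1} t * ennreal (sqrt (1 - t\<^sup>2) ^ (N-1)) \<partial>lborel)"
    by (rule nn_integral_cmult) simp
  also have "(\<integral>\<^sup>+t. indicator {-1..1} t * ennreal (sqrt (1 - t\<^sup>2) ^ (N-1)) \<partial>lborel) = ennreal (W N)"
  proof -
    have "N - 1 + 1 = N" using N by simp
    hence hI: "((\<lambda>t. sqrt (1 - t\<^sup>2) ^ (N-1)) has_integral W N) {-1..1}" using den_int[of "N-1"] by simp
    have "(\<integral>\<^sup>+t. ennreal (indicator {-1..1} t * sqrt (1 - t\<^sup>2) ^ (N-1)) \<partial>lborel) = ennreal (W N)"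
      by (rule nn_integral_has_integral_lebesgue[OF _ hI]) (simp add: abs_square_le_1 abs_le_iff)
    moreover have "(\<integral>\<^sup>+t. indicator {-1..1} t * ennreal (sqrt (1 - t\<^sup>2) ^ (N-1)) \<partial>lborel) =
      (\<integral>\<^sup>+t. ennreal (indicator {-1..1} t * sqrt (1 - t\<^sup>2) ^ (N-1)) \<partial>lborel)"
      by (intro nn_integral_cong) (auto simp: indicator_def)
    ultimately show ?thesis by simp
  qed
  finally show ?thesis by (simp add: ennreal_mult W_nonneg)
qed

definition Num :: "nat \<Rightarrow> real \<Rightarrow> real" where
  "Num N \<theta> = sin \<theta> ^ (N-1) * cos \<theta> / real N + integral {0..\<theta>} (\<lambda>x. sin x ^ N)"

lemma cone_emeasure:
  assumes N: "2 \<le> N" and th: "0 \<le> \<theta>" "\<theta> < pi/2"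
  shows "emeasure (lebN N) (sph_cone N \<theta>) = ennreal (Vb N * Num N \<theta>)"
proof -
  let ?P = "\<lambda>t u. 0 < sqrt (t\<^sup>2 + u) \<and> sqrt (t\<^sup>2 + u) \<le> 1 \<and> cos \<theta> * sqrt (t\<^sup>2 + u) \<le> t"
  have [measurable]: "(\<lambda>y. y 0) \<in> borel_measurable (lebN N)" using comp0_meas N by simp
  have [measurable]: "(\<lambda>y. y 0) \<in> borel_measurable (Pi\<^sub>M {..<N} (\<lambda>i. borel))"
    using measurable_component_singleton[of 0 "{..<N}" "\<lambda>_. borel"] N by simp
  have eq1: "sph_cone N \<theta> = {y \<in> space (lebN N). 0 < enorm N y \<and> enorm N y \<le> 1 \<and> cos \<theta> * enorm N y \<le> y 0}"
  proof -
    have "arccos (y 0 / enorm N y) \<le> \<theta> \<longleftrightarrow> cos \<theta> * enorm N y \<le> y 0" if e: "0 < enorm N y" for y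
    proof -
      have "\<bar>y 0\<bar> \<le> enorm N y"
      proof -
        have "\<bar>y 0\<bar> = sqrt ((y 0)\<^sup>2)" by simp
        also have "\<dots> \<le> sqrt ((y 0)\<^sup>2 + (\<Sum>i\<in>{1..<N}. (y i)\<^sup>2))"
          by (intro real_sqrt_le_mono) (simp add: sum_nonneg)
        finally show ?thesis using enorm_split[of N y] N by simp
      qed
      hence v: "-1 \<le> y 0 / enorm N y" "y 0 / enorm N y \<le> 1" using e by (auto simp: divide_le_eq le_divide_eq abs_le_iff)
      have "arccos (y 0 / enorm N y) \<le> \<theta> \<longleftrightarrow> cos \<theta> \<le> y 0 / enorm N y"
        using th v by (intro arccos_le_iff) auto
      also have "\<dots> \<longleftrightarrow> cos \<theta> * enorm N y \<le> y 0" using e by (simp add: le_divide_eq)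
      finally show ?thesis .
    qed
    thus ?thesis unfolding sph_cone_def by auto
  qed
  have meas: "sph_cone N \<theta> \<in> sets (lebN N)"
  proof -
    have m0: "(\<lambda>y. y 0) \<in> borel_measurable (lebN N)" using comp0_meas N by simp
    have m1: "(\<lambda>y. cos \<theta> * enorm N y) \<in> borel_measurable (lebN N)" by measurable
    have S1: "{y \<in> space (lebN N). (\<lambda>_. 0) y < enorm N y} \<in> sets (lebN N)"
      by (rule borel_measurable_less) (auto simp: enorm_meas)
    have S2: "{y \<in> space (lebN N). enorm N y \<le> (\<lambda>_. 1) y} \<in> sets (lebN N)"
      by (rule borel_measurable_le) (auto simp: enorm_meas)
    have S3: "{y \<in> space (lebN N). cos \<theta> * enorm N y \<le> y 0} \<in> sets (lebN N)"
      by (rule borel_measurable_le[OF m1 m0])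
    have "sph_cone N \<theta> = {y \<in> space (lebN N). (\<lambda>_. 0) y < enorm N y} \<inter> {y \<in> space (lebN N). enorm N y \<le> (\<lambda>_. 1) y}
       \<inter> {y \<in> space (lebN N). cos \<theta> * enorm N y \<le> y 0}" unfolding eq1 by auto
    thus ?thesis using S1 S2 S3 by simp
  qed
  have eq2: "sph_cone N \<theta> = {y \<in> space (lebN N). ?P (y 0) (\<Sum>i\<in>{1..<N}. (y i)\<^sup>2)}"
    unfolding eq1 using enorm_split N by auto
  have "emeasure (lebN N) (sph_cone N \<theta>) =
     (\<integral>\<^sup>+t. indicator {0<..1} t * ennreal (Vb N * rho \<theta> t ^ (N-1)) \<partial>lborel)"
    unfolding eq2
    by (rule slice_measure[where P = ?P])
       (use N meas eq2 cone_iff[OF th] in \<open>auto simp: rho_def abs_square_le_1 abs_le_iff\<close>)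
  also have "\<dots> = (\<integral>\<^sup>+t. ennreal (Vb N) * (indicator {0..1} t * ennreal (rho \<theta> t ^ (N-1))) \<partial>lborel)"
  proof (intro nn_integral_cong)
    fix t :: real
    have "rho \<theta> 0 = 0" unfolding rho_def by simp
    hence "rho \<theta> 0 ^ (N-1) = 0" using N by simp
    thus "indicator {0<..1} t * ennreal (Vb N * rho \<theta> t ^ (N-1)) = ennreal (Vb N) * (indicator {0..1} t * ennreal (rho \<theta> t ^ (N-1)))"
    proof (cases "t \<in> {0<..1}")
      case True
      hence "0 \<le> rho \<theta> t ^ (N-1)" using rho_nonneg[of t \<theta>] by simp
      thus ?thesis using True by (simp add: ennreal_mult)
    next
      case False
      thus ?thesis using \<open>rho \<theta> 0 ^ (N-1) = 0\<close> by (cases "t = 0") (auto simp: indicator_def)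
    qed
  qed
  also have "\<dots> = ennreal (Vb N) * (\<integral>\<^sup>+t. indicator {0..1} t * ennreal (rho \<theta> t ^ (N-1)) \<partial>lborel)"
  proof (rule nn_integral_cmult)
    show "(\<lambda>t. indicator {0..1} t * ennreal (rho \<theta> t ^ (N-1))) \<in> borel_measurable lborel"
      by (rule rho_meas)
  qed
  also have "(\<integral>\<^sup>+t. indicator {0..1} t * ennreal (rho \<theta> t ^ (N-1)) \<partial>lborel) = ennreal (Num N \<theta>)"
  proof -
    have "N - 1 + 1 = N" "real (N - 1) + 1 = real N" using N by auto
    hence hI: "((\<lambda>t. rho \<theta> t ^ (N-1)) has_integral Num N \<theta>) {0..1}" using num_int[OF th, of "N-1"]
      unfolding Num_def by simp
    have "(\<integral>\<^sup>+t. ennreal (indicator {0..1} t * rho \<theta> t ^ (N-1)) \<partial>lborel) = ennreal (Num N \<theta>)"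
      by (rule nn_integral_has_integral_lebesgue[OF _ hI]) (simp add: rho_def abs_square_le_1 abs_le_iff)
    moreover have "(\<integral>\<^sup>+t. indicator {0..1} t * ennreal (rho \<theta> t ^ (N-1)) \<partial>lborel) =
      (\<integral>\<^sup>+t. ennreal (indicator {0..1} t * rho \<theta> t ^ (N-1)) \<partial>lborel)"
      by (intro nn_integral_cong) (auto simp: indicator_def)
    ultimately show ?thesis by simp
  qed
  moreover have "0 \<le> Num N \<theta>"
  proof -
    have "0 \<le> sin \<theta>" "0 \<le> cos \<theta>" using th by (auto intro!: sin_ge_zero cos_ge_zero)
    moreover have "0 \<le> integral {0..\<theta>} (\<lambda>x. sin x ^ N)"
      using th by (intro integral_nonneg integrable_continuous_interval continuous_intros)
         (auto intro!: zero_le_power sin_ge_zero)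
    ultimately show ?thesis unfolding Num_def by simp
  qed
  ultimately show ?thesis by (simp add: ennreal_mult)
qed



lemma W_pos: "1 \<le> k \<Longrightarrow> 0 < W k"
proof -
  assume k: "1 \<le> k"
  have "0 < 2*pi/(real k + 1)" by simp
  also have "\<dots> \<le> (W k)^2" using W_bounds(1)[OF k] .
  finally have "W k \<noteq> 0" by auto
  thus ?thesis using W_nonneg[of k] by simp
qed

lemma Num_nonneg: "0 \<le> \<theta> \<Longrightarrow> \<theta> < pi/2 \<Longrightarrow> 0 \<le> Num N \<theta>"
proof -
  assume th: "0 \<le> \<theta>" "\<theta> < pi/2"
  have "0 \<le> sin \<theta>" "0 \<le> cos \<theta>" using th by (auto intro!: sin_ge_zero cos_ge_zero)
  moreover have "0 \<le> integral {0..\<theta>} (\<lambda>x. sin x ^ N)"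
    using th by (intro integral_nonneg integrable_continuous_interval continuous_intros)
       (auto intro!: zero_le_power sin_ge_zero)
  ultimately show ?thesis unfolding Num_def by simp
qed

lemma sph_frac_eq:
  assumes N: "2 \<le> N" and th: "0 \<le> \<theta>" "\<theta> < pi/2"
  shows "sph_frac N \<theta> = Num N \<theta> / W N"
proof -
  have V: "0 < Vb N" by simp
  have Wp: "0 < W N" using N by (intro W_pos) simp
  have "measure (lebN N) (sph_cone N \<theta>) = Vb N * Num N \<theta>"
    unfolding measure_def using cone_emeasure[OF N th] V Num_nonneg[OF th] by simp
  moreover have "measure (lebN N) {y \<in> space (lebN N). enorm N y \<le> 1} = Vb N * W N"
    unfolding measure_def using ball_emeasure[OF N] V Wp by simp
  moreover have V': "Vb N \<noteq> 0" using V by linarith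
  ultimately show ?thesis unfolding sph_frac_def using V' by simp
qed

lemma sph_frac_0: "2 \<le> N \<Longrightarrow> sph_frac N 0 = 0"
  by (subst sph_frac_eq) (auto simp: Num_def)

lemma sph_frac_pos:
  assumes N: "2 \<le> N" and th: "0 < \<theta>" "\<theta> < pi/2"
  shows "0 < sph_frac N \<theta>"
proof -
  have "0 < sin \<theta>" "0 < cos \<theta>" using th by (auto intro!: sin_gt_zero cos_gt_zero_pi)
  hence "0 < sin \<theta> ^ (N-1) * cos \<theta> / real N" using N by simp
  moreover have "0 \<le> integral {0..\<theta>} (\<lambda>x. sin x ^ N)"
    using th by (intro integral_nonneg integrable_continuous_interval continuous_intros)
       (auto intro!: zero_le_power sin_ge_zero)
  ultimately have "0 < Num N \<theta>" unfolding Num_def by linarith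
  moreover have "0 < W N" using N by (intro W_pos) simp
  ultimately show ?thesis using sph_frac_eq[OF N] th by simp
qed

lemma Num_deriv:
  assumes N: "2 \<le> N" and th: "0 < \<theta>" "\<theta> < pi/2"
  shows "(Num N has_real_derivative (real (N-1) / real N * sin \<theta> ^ (N-2))) (at \<theta>)"
proof -
  obtain k where k: "N = k + 2" using N by (metis add.commute le_Suc_ex)
  have p: "((\<lambda>x. sin x ^ (k+1)) has_real_derivative (real (k+1) * (cos \<theta> * sin \<theta> ^ k))) (at \<theta>)"
    using DERIV_power[OF DERIV_sin[of \<theta>], of "k+1"] by simp
  have d1: "((\<lambda>x. sin x ^ (k+1) * cos x / real N) has_real_derivative
      ((real (k+1) * (cos \<theta> * sin \<theta> ^ k) * cos \<theta> + (- sin \<theta>) * sin \<theta> ^ (k+1)) / real N)) (at \<theta>)"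
    by (intro DERIV_cdivide DERIV_mult p DERIV_cos)
  have d2: "((\<lambda>x. integral {0..x} (\<lambda>x. sin x ^ N)) has_real_derivative sin \<theta> ^ N) (at \<theta>)"
  proof -
    have "((\<lambda>x. integral {0..x} (\<lambda>x. sin x ^ N)) has_real_derivative sin \<theta> ^ N) (at \<theta> within {0..pi/2})"
      using th by (intro integral_has_real_derivative continuous_intros) auto
    moreover have "at \<theta> within {0..pi/2} = at \<theta>" using th by (intro at_within_Icc_at) auto
    ultimately show ?thesis by simp
  qed
  have eqf: "Num N = (\<lambda>x. sin x ^ (k+1) * cos x / real N + integral {0..x} (\<lambda>x. sin x ^ N))"
    by (rule ext) (simp add: Num_def k)
  have "(Num N has_real_derivative
      ((real (k+1) * (cos \<theta> * sin \<theta> ^ k) * cos \<theta> + (- sin \<theta>) * sin \<theta> ^ (k+1)) / real N + sin \<theta> ^ N)) (at \<theta>)"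
    unfolding eqf by (rule DERIV_add[OF d1 d2])
  moreover have "(real (k+1) * (cos \<theta> * sin \<theta> ^ k) * cos \<theta> + (- sin \<theta>) * sin \<theta> ^ (k+1)) / real N + sin \<theta> ^ N
      = real (N-1) / real N * sin \<theta> ^ (N-2)"
  proof -
    define a where "a = sin \<theta> ^ k"
    define s where "s = sin \<theta>"
    define c where "c = cos \<theta>"
    have cs: "c * c = 1 - s * s" unfolding c_def s_def using sin_cos_squared_add[of \<theta>] by (simp add: power2_eq_square)
    have e1: "sin \<theta> ^ (k+1) = a * s" "sin \<theta> ^ N = a * s * s" "sin \<theta> ^ (N-2) = a"
      unfolding a_def s_def k by (simp_all add: power_add power2_eq_square)
    have Nr: "real N = real k + 2" "real (N-1) = real k + 1" using k by auto
    have "(real (k+1) * (cos \<theta> * sin \<theta> ^ k) * cos \<theta> + (- sin \<theta>) * sin \<theta> ^ (k+1)) / real N + sin \<theta> ^ N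
        = ((real k + 1) * a * (c * c) - a * s * s) / (real k + 2) + a * s * s"
      unfolding e1 Nr unfolding a_def s_def c_def by (simp add: algebra_simps)
    also have "\<dots> = (real k + 1) / (real k + 2) * a"
      unfolding cs by (simp add: field_simps)
    finally show ?thesis unfolding e1 Nr .
  qed
  ultimately show ?thesis by simp
qed

lemma sph_frac_deriv:
  assumes N: "2 \<le> N" and th: "0 < \<theta>" "\<theta> < pi/2"
  shows "(sph_frac N has_real_derivative (real (N-1) / real N * sin \<theta> ^ (N-2) / W N)) (at \<theta>)"
proof (rule has_field_derivative_transform_within_open[where S = "{0<..<pi/2}"])
  show "((\<lambda>x. Num N x / W N) has_real_derivative (real (N-1) / real N * sin \<theta> ^ (N-2) / W N)) (at \<theta>)"
    by (rule DERIV_cdivide[OF Num_deriv[OF assms]])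
  show "Num N x / W N = sph_frac N x" if "x \<in> {0<..<pi/2}" for x
    using sph_frac_eq[OF N, of x] that by simp
qed (use th in auto)



lemma sum_sq_comb:
  fixes \<alpha> \<beta> :: real
  shows "(\<Sum>i\<in>I. (\<alpha> * a i + \<beta> * b i)\<^sup>2) =
     \<alpha>\<^sup>2 * (\<Sum>i\<in>I. (a i)\<^sup>2) + 2 * \<alpha> * \<beta> * (\<Sum>i\<in>I. a i * b i) + \<beta>\<^sup>2 * (\<Sum>i\<in>I. (b i)\<^sup>2)"
proof -
  have "(\<Sum>i\<in>I. (\<alpha> * a i + \<beta> * b i)\<^sup>2) =
      (\<Sum>i\<in>I. \<alpha>\<^sup>2 * (a i)\<^sup>2 + 2 * \<alpha> * \<beta> * (a i * b i) + \<beta>\<^sup>2 * (b i)\<^sup>2)"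
    by (intro sum.cong) (auto simp: power2_eq_square algebra_simps)
  also have "\<dots> = \<alpha>\<^sup>2 * (\<Sum>i\<in>I. (a i)\<^sup>2) + 2 * \<alpha> * \<beta> * (\<Sum>i\<in>I. a i * b i) + \<beta>\<^sup>2 * (\<Sum>i\<in>I. (b i)\<^sup>2)"
    by (simp add: sum.distrib sum_distrib_left)
  finally show ?thesis .
qed

lemma sum_lin_comb:
  fixes \<alpha> \<beta> :: real
  shows "(\<Sum>i\<in>I. (\<alpha> * a i + \<beta> * b i) * a i) = \<alpha> * (\<Sum>i\<in>I. (a i)\<^sup>2) + \<beta> * (\<Sum>i\<in>I. a i * b i)"
proof -
  have "(\<Sum>i\<in>I. (\<alpha> * a i + \<beta> * b i) * a i) = (\<Sum>i\<in>I. \<alpha> * (a i)\<^sup>2 + \<beta> * (a i * b i))"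
    by (intro sum.cong) (auto simp: power2_eq_square algebra_simps)
  thus ?thesis by (simp add: sum.distrib sum_distrib_left)
qed

lemma sum01:
  fixes N :: nat
  assumes "2 \<le> N" "\<And>i. 2 \<le> i \<Longrightarrow> f i = (0::real)"
  shows "(\<Sum>i<N. f i) = f 0 + f 1"
proof -
  have "(\<Sum>i<N. f i) = (\<Sum>i\<in>{0,1}. f i)"
    using assms by (intro sum.mono_neutral_right) auto
  thus ?thesis by simp
qed

lemma exists_orth:
  fixes N :: nat and v :: "nat \<Rightarrow> real"
  assumes N: "2 \<le> N"
  shows "\<exists>w. (\<Sum>i<N. w i * v i) = 0 \<and> (\<Sum>i<N. (w i)\<^sup>2) = (1::real)"
proof (cases "(v 0)\<^sup>2 + (v 1)\<^sup>2 = 0")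
  case True
  hence v0: "v 0 = 0" by (simp add: sum_power2_eq_zero_iff)
  define w :: "nat \<Rightarrow> real" where "w i = (if i = 0 then 1 else 0)" for i
  have "(\<Sum>i<N. w i * v i) = w 0 * v 0 + w 1 * v 1" using N by (intro sum01) (auto simp: w_def)
  moreover have "(\<Sum>i<N. (w i)\<^sup>2) = (w 0)\<^sup>2 + (w 1)\<^sup>2" using N by (intro sum01) (auto simp: w_def)
  ultimately show ?thesis using v0 by (intro exI[of _ w]) (simp add: w_def)
next
  case False
  define q where "q = sqrt ((v 0)\<^sup>2 + (v 1)\<^sup>2)"
  have q: "0 < q" unfolding q_def using False by (simp add: add_nonneg_nonneg add_pos_nonneg
        order_le_neq_trans[OF add_nonneg_nonneg[OF zero_le_power2 zero_le_power2]])
  have q2: "q\<^sup>2 = (v 0)\<^sup>2 + (v 1)\<^sup>2" unfolding q_def by simp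
  define w :: "nat \<Rightarrow> real" where "w i = (if i = 0 then - v 1 else if i = 1 then v 0 else 0) / q" for i
  have "(\<Sum>i<N. w i * v i) = w 0 * v 0 + w 1 * v 1" using N by (intro sum01) (auto simp: w_def)
  also have "\<dots> = 0" by (simp add: w_def field_simps)
  finally have 1: "(\<Sum>i<N. w i * v i) = 0" .
  have "(\<Sum>i<N. (w i)\<^sup>2) = (w 0)\<^sup>2 + (w 1)\<^sup>2" using N by (intro sum01) (auto simp: w_def)
  also have "\<dots> = ((v 0)\<^sup>2 + (v 1)\<^sup>2) / q\<^sup>2" by (simp add: w_def power_divide add_divide_distrib)
  also have "\<dots> = 1" unfolding q2[symmetric] using q by simp
  finally show ?thesis using 1 by blast
qed

lemma enorm_sq: "(enorm N y)\<^sup>2 = (\<Sum>i<N. (y i)\<^sup>2)"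
  unfolding enorm_def by (simp add: sum_nonneg)


lemma cap_angle_eq:
  fixes ybar :: "nat \<Rightarrow> real"
  assumes N: "2 \<le> N" and R: "enorm N ybar = R" "0 < R" and s: "0 \<le> s" "s < R"
    and r: "R - s \<le> r" "r \<le> R + s"
  shows "cap_angle N ybar s r = arccos ((r\<^sup>2 + R\<^sup>2 - s\<^sup>2) / (2*R*r))"
proof -
  define c where "c = (r\<^sup>2 + R\<^sup>2 - s\<^sup>2) / (2*R*r)"
  have r0: "0 < r" using r s by linarith
  have cR: "c * (2*R*r) = r\<^sup>2 + R\<^sup>2 - s\<^sup>2" unfolding c_def using r0 R by simp
  have c1: "c \<le> 1"
  proof -
    have "(r - R)\<^sup>2 \<le> s\<^sup>2" using r s by (simp add: abs_le_iff power2_le_iff_abs_le)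
    hence "r\<^sup>2 + R\<^sup>2 - s\<^sup>2 \<le> 2*R*r" by (simp add: power2_diff algebra_simps)
    thus ?thesis unfolding c_def using r0 R by (simp add: divide_le_eq)
  qed
  have c0: "0 < c"
  proof -
    have "s\<^sup>2 < R\<^sup>2" using s by (simp add: power_strict_mono)
    hence "0 < r\<^sup>2 + R\<^sup>2 - s\<^sup>2" using r0 zero_le_power2[of r] by linarith
    thus ?thesis unfolding c_def using r0 R by simp
  qed
  have R2: "(\<Sum>i<N. (ybar i)\<^sup>2) = R\<^sup>2" using enorm_sq[of N ybar] R by simp
  define A where "A = {y. enorm N y = r \<and> enorm N (\<lambda>i. y i - ybar i) \<le> s}"
  define f where "f y = arccos (einner N y ybar / (enorm N y * enorm N ybar))" for y
  have upper: "f y \<le> arccos c" if y: "y \<in> A" for y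
  proof -
    have yr: "enorm N y = r" and ys: "enorm N (\<lambda>i. y i - ybar i) \<le> s" using y by (auto simp: A_def)
    have y2: "(\<Sum>i<N. (y i)\<^sup>2) = r\<^sup>2" using enorm_sq[of N y] yr by simp
    define p where "p = (\<Sum>i<N. y i * ybar i)"
    have "(\<Sum>i<N. (y i - ybar i)\<^sup>2) = (\<Sum>i<N. (1 * y i + (-1) * ybar i)\<^sup>2)" by simp
    also have "\<dots> = r\<^sup>2 - 2 * p + R\<^sup>2" unfolding sum_sq_comb y2 R2 p_def by simp
    finally have d2: "(\<Sum>i<N. (y i - ybar i)\<^sup>2) = r\<^sup>2 - 2 * p + R\<^sup>2" .
    have "(enorm N (\<lambda>i. y i - ybar i))\<^sup>2 \<le> s\<^sup>2" by (rule power_mono[OF ys]) (simp add: enorm_def sum_nonneg)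
    hence "r\<^sup>2 - 2 * p + R\<^sup>2 \<le> s\<^sup>2" using enorm_sq[of N "\<lambda>i. y i - ybar i"] d2 by simp
    hence lo: "c * (r * R) \<le> p" using cR by (simp add: algebra_simps)
    have "0 \<le> (\<Sum>i<N. (R * y i + (-r) * ybar i)\<^sup>2)" by (simp add: sum_nonneg)
    also have "\<dots> = 2 * R\<^sup>2 * r\<^sup>2 - 2 * R * r * p" unfolding sum_sq_comb y2 R2 p_def
      by (simp add: power2_eq_square algebra_simps)
    finally have "R * r * p \<le> R * r * (R * r)" by (simp add: power2_eq_square algebra_simps)
    hence up: "p \<le> r * R" using r0 R by (simp add: mult.commute)
    have q: "einner N y ybar / (enorm N y * enorm N ybar) = p / (r * R)"
      unfolding einner_def p_def yr R ..
    have "c \<le> p / (r * R)" using lo r0 R by (simp add: le_divide_eq)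
    moreover have "p / (r * R) \<le> 1" using up r0 R by (simp add: divide_le_eq)
    ultimately have "arccos (p / (r * R)) \<le> arccos c" using c0 by (intro arccos_le_arccos) auto
    thus ?thesis unfolding f_def q .
  qed
  obtain w where w1: "(\<Sum>i<N. w i * ybar i) = 0" and w2: "(\<Sum>i<N. (w i)\<^sup>2) = 1"
    using exists_orth[OF N, of ybar] by blast
  have w1': "(\<Sum>i<N. ybar i * w i) = 0" using w1 by (simp add: mult.commute)
  define \<alpha> where "\<alpha> = r * c / R"
  define \<beta> where "\<beta> = r * sqrt (1 - c\<^sup>2)"
  define Y where "Y i = \<alpha> * ybar i + \<beta> * w i" for i
  have c2: "0 \<le> 1 - c\<^sup>2" using c0 c1 by (simp add: power_le_one)
  have b2: "\<beta>\<^sup>2 = r\<^sup>2 * (1 - c\<^sup>2)" unfolding \<beta>_def using c2 by (simp add: power_mult_distrib)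
  have aR: "\<alpha> * R = r * c" unfolding \<alpha>_def using R by simp
  have "(\<Sum>i<N. (Y i)\<^sup>2) = \<alpha>\<^sup>2 * R\<^sup>2 + \<beta>\<^sup>2" unfolding Y_def sum_sq_comb R2 w1' w2 by simp
  also have "\<dots> = r\<^sup>2" unfolding b2 using aR by (simp add: power_mult_distrib[symmetric] power2_eq_square algebra_simps)
  finally have Y2: "(\<Sum>i<N. (Y i)\<^sup>2) = r\<^sup>2" .
  have "(\<Sum>i<N. (Y i - ybar i)\<^sup>2) = (\<Sum>i<N. ((\<alpha> - 1) * ybar i + \<beta> * w i)\<^sup>2)"
    unfolding Y_def by (simp add: algebra_simps)
  also have "\<dots> = (\<alpha> - 1)\<^sup>2 * R\<^sup>2 + \<beta>\<^sup>2" unfolding sum_sq_comb R2 w1' w2 by simp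
  also have "\<dots> = (\<alpha> * R)\<^sup>2 - 2 * (\<alpha> * R) * R + R\<^sup>2 + \<beta>\<^sup>2" by (simp add: power2_eq_square algebra_simps)
  also have "\<dots> = r\<^sup>2 - c * (2 * R * r) + R\<^sup>2" unfolding aR b2 by (simp add: power2_eq_square algebra_simps)
  also have "\<dots> = s\<^sup>2" unfolding cR by simp
  finally have Yd: "(\<Sum>i<N. (Y i - ybar i)\<^sup>2) = s\<^sup>2" .
  have Yp: "(\<Sum>i<N. Y i * ybar i) = r * c * R"
    unfolding Y_def sum_lin_comb R2 w1' using aR by (simp add: power2_eq_square algebra_simps)
  have eY: "enorm N Y = r" unfolding enorm_def Y2 using r0 by simp
  have eYd: "enorm N (\<lambda>i. Y i - ybar i) = s" unfolding enorm_def Yd using s by simp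
  have YA: "Y \<in> A" unfolding A_def using eY eYd by simp
  have fY: "f Y = arccos c" unfolding f_def einner_def Yp eY R using r0 R by simp
  have "cap_angle N ybar s r = Sup (f ` A)" unfolding cap_angle_def f_def A_def ..
  also have "\<dots> = arccos c"
  proof (rule cSup_eq_maximum)
    show "arccos c \<in> f ` A" using YA fY by (metis image_eqI)
    show "x \<le> arccos c" if "x \<in> f ` A" for x using that upper by auto
  qed
  finally show ?thesis unfolding c_def .
qed



lemma setting_facts:
  assumes "setting N n \<tau> \<beta> x ybar"
  shows "3 \<le> N" "0 < \<tau>" "0 < Rrad N \<tau>" "0 \<le> sval N \<tau> \<beta> n x" "sval N \<tau> \<beta> n x < Rrad N \<tau>"
    "(rbar N \<tau> \<beta> n x)\<^sup>2 = (Rrad N \<tau>)\<^sup>2 - (sval N \<tau> \<beta> n x)\<^sup>2"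
    "(Rrad N \<tau>)\<^sup>2 = 2 * real N * \<tau>" "enorm N ybar = Rrad N \<tau>" "0 \<le> rbar N \<tau> \<beta> n x"
proof -
  define R where "R = Rrad N \<tau>"
  define s where "s = sval N \<tau> \<beta> n x"
  have st: "3 \<le> N" "0 < \<tau>" "0 < \<beta>" "\<beta> < 1" "enorm N ybar = R" "enorm n x \<le> \<beta> * R"
    using assms(1) unfolding setting_def R_def by auto
  thus "3 \<le> N" "0 < \<tau>" "enorm N ybar = Rrad N \<tau>" unfolding R_def by auto
  have R2: "R\<^sup>2 = 2 * real N * \<tau>" unfolding R_def Rrad_def using st by simp
  thus "(Rrad N \<tau>)\<^sup>2 = 2 * real N * \<tau>" unfolding R_def .
  have R0: "0 < R" unfolding R_def Rrad_def using st by simp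
  thus "0 < Rrad N \<tau>" unfolding R_def .
  have x0: "0 \<le> enorm n x" unfolding enorm_def by (simp add: sum_nonneg)
  have "(enorm n x)\<^sup>2 \<le> (\<beta> * R)\<^sup>2" using st x0 by (intro power_mono) auto
  hence d: "0 \<le> \<beta>\<^sup>2 * R\<^sup>2 - (enorm n x)\<^sup>2" by (simp add: power_mult_distrib)
  have sq: "s = sqrt (\<beta>\<^sup>2 * R\<^sup>2 - (enorm n x)\<^sup>2)" unfolding s_def sval_def R_def ..
  have s2: "s\<^sup>2 = \<beta>\<^sup>2 * R\<^sup>2 - (enorm n x)\<^sup>2" using real_sqrt_pow2[OF d] sq by metis
  have s0: "0 \<le> s" using sq d by simp
  thus "0 \<le> sval N \<tau> \<beta> n x" unfolding s_def .
  have "\<beta> * \<beta> < 1 * 1" using st by (intro mult_strict_mono) auto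
  hence "\<beta>\<^sup>2 < 1" by (simp add: power2_eq_square)
  hence "\<beta>\<^sup>2 * R\<^sup>2 < R\<^sup>2" using R0 by simp
  hence sR: "s\<^sup>2 < R\<^sup>2" using s2 by (smt (verit) zero_le_power2)
  hence "s < R" using s0 R0 by (simp add: power_less_imp_less_base)
  thus "sval N \<tau> \<beta> n x < Rrad N \<tau>" unfolding s_def R_def .
  have "0 \<le> R\<^sup>2 - s\<^sup>2" using sR by simp
  moreover have rb: "rbar N \<tau> \<beta> n x = sqrt (R\<^sup>2 - s\<^sup>2)" unfolding rbar_def R_def s_def ..
  ultimately have "(rbar N \<tau> \<beta> n x)\<^sup>2 = R\<^sup>2 - s\<^sup>2" by simp
  thus "(rbar N \<tau> \<beta> n x)\<^sup>2 = (Rrad N \<tau>)\<^sup>2 - (sval N \<tau> \<beta> n x)\<^sup>2" unfolding R_def s_def .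
  show "0 \<le> rbar N \<tau> \<beta> n x" unfolding rb using \<open>0 \<le> R\<^sup>2 - s\<^sup>2\<close> by simp
qed


lemma theta_eq:
  assumes set: "setting N n \<tau> \<beta> x ybar"
    and r: "Rrad N \<tau> - sval N \<tau> \<beta> n x \<le> r" "r \<le> Rrad N \<tau> + sval N \<tau> \<beta> n x"
  shows "theta N \<tau> \<beta> n x ybar r = arccos ((r\<^sup>2 + (rbar N \<tau> \<beta> n x)\<^sup>2) / (2 * Rrad N \<tau> * r))"
proof -
  note F = setting_facts[OF set]
  have "theta N \<tau> \<beta> n x ybar r = arccos ((r\<^sup>2 + (Rrad N \<tau>)\<^sup>2 - (sval N \<tau> \<beta> n x)\<^sup>2) / (2 * Rrad N \<tau> * r))"
    unfolding theta_def using F by (intro cap_angle_eq r) auto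
  moreover have "r\<^sup>2 + (Rrad N \<tau>)\<^sup>2 - (sval N \<tau> \<beta> n x)\<^sup>2 = r\<^sup>2 + (rbar N \<tau> \<beta> n x)\<^sup>2"
    using F(6) by simp
  ultimately show ?thesis by simp
qed

lemma c_bounds:
  fixes R s rb r :: real
  assumes R: "0 < R" and s: "0 \<le> s" "s < R" and rb: "rb\<^sup>2 = R\<^sup>2 - s\<^sup>2"
    and r: "R - s < r" "r < R + s"
  shows "0 < (r\<^sup>2 + rb\<^sup>2) / (2 * R * r)" "(r\<^sup>2 + rb\<^sup>2) / (2 * R * r) < 1"
proof -
  have r0: "0 < r" using r s by linarith
  have "s\<^sup>2 < R\<^sup>2" using s by (simp add: power_strict_mono)
  hence "0 < r\<^sup>2 + rb\<^sup>2" using rb r0 by (smt (verit) zero_less_power)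
  thus "0 < (r\<^sup>2 + rb\<^sup>2) / (2 * R * r)" using R r0 by simp
  have "\<bar>r - R\<bar> < s" using r by auto
  hence "(r - R)\<^sup>2 < s\<^sup>2" using s by (metis abs_ge_zero power2_abs power_strict_mono zero_less_numeral)
  hence "r\<^sup>2 + rb\<^sup>2 < 2 * R * r" using rb by (simp add: power2_diff algebra_simps)
  thus "(r\<^sup>2 + rb\<^sup>2) / (2 * R * r) < 1" using R r0 by simp
qed


lemma point_main:
  assumes set: "setting N n \<tau> \<beta> x ybar"
    and r: "Rrad N \<tau> - sval N \<tau> \<beta> n x < r" "r < Rrad N \<tau> + sval N \<tau> \<beta> n x"
  shows "cos (theta N \<tau> \<beta> n x ybar r) = (r\<^sup>2 + (rbar N \<tau> \<beta> n x)\<^sup>2) / (2 * Rrad N \<tau> * r)"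
    and "(theta N \<tau> \<beta> n x ybar has_real_derivative
           (- (1 / sin (theta N \<tau> \<beta> n x ybar r)) *
              ((r\<^sup>2 - (rbar N \<tau> \<beta> n x)\<^sup>2) / (2 * Rrad N \<tau> * r\<^sup>2)))) (at r)"
    and "0 < theta N \<tau> \<beta> n x ybar r" "theta N \<tau> \<beta> n x ybar r < pi/2"
    and "sin (theta N \<tau> \<beta> n x ybar r) = sqrt (1 - ((r\<^sup>2 + (rbar N \<tau> \<beta> n x)\<^sup>2) / (2 * Rrad N \<tau> * r))\<^sup>2)"
proof -
  note F = setting_facts[OF set]
  define R where "R = Rrad N \<tau>"
  define s where "s = sval N \<tau> \<beta> n x"
  define rb where "rb = rbar N \<tau> \<beta> n x"
  define c where "c = (\<lambda>r'. (r'\<^sup>2 + rb\<^sup>2) / (2 * R * r'))"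
  have R0: "0 < R" and s0: "0 \<le> s" and sR: "s < R" and rb2: "rb\<^sup>2 = R\<^sup>2 - s\<^sup>2"
    using F unfolding R_def s_def rb_def by auto
  have r': "R - s < r" "r < R + s" using r unfolding R_def s_def by auto
  have r0: "0 < r" using r' s0 sR by linarith
  have cb: "0 < c r" "c r < 1" unfolding c_def using c_bounds[OF R0 s0 sR rb2 r'] by auto
  have th: "theta N \<tau> \<beta> n x ybar r' = arccos (c r')" if "r' \<in> {R - s<..<R + s}" for r'
    using theta_eq[OF set, of r'] that unfolding c_def R_def s_def rb_def by auto
  have thr: "theta N \<tau> \<beta> n x ybar r = arccos (c r)" using th r' by auto
  show "cos (theta N \<tau> \<beta> n x ybar r) = (r\<^sup>2 + (rbar N \<tau> \<beta> n x)\<^sup>2) / (2 * Rrad N \<tau> * r)"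
    unfolding thr using cb by (simp add: cos_arccos c_def R_def rb_def)
  have sn: "sin (theta N \<tau> \<beta> n x ybar r) = sqrt (1 - (c r)\<^sup>2)" unfolding thr using cb by (simp add: sin_arccos)
  thus "sin (theta N \<tau> \<beta> n x ybar r) = sqrt (1 - ((r\<^sup>2 + (rbar N \<tau> \<beta> n x)\<^sup>2) / (2 * Rrad N \<tau> * r))\<^sup>2)"
    unfolding c_def R_def rb_def .
  have "arccos 1 < arccos (c r)" using cb by (intro arccos_less_arccos) auto
  thus "0 < theta N \<tau> \<beta> n x ybar r" unfolding thr by simp
  have "arccos (c r) < arccos 0" using cb by (intro arccos_less_arccos) auto
  thus "theta N \<tau> \<beta> n x ybar r < pi/2" unfolding thr by simp
  have dc: "(c has_real_derivative ((r\<^sup>2 - rb\<^sup>2) / (2 * R * r\<^sup>2))) (at r)"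
  proof -
    have d1: "((\<lambda>r'. r'\<^sup>2 + rb\<^sup>2) has_real_derivative 2 * r) (at r)"
      using DERIV_pow[of 2 r] by (auto intro!: derivative_eq_intros)
    have d2: "((\<lambda>r'. 2 * R * r') has_real_derivative 2 * R) (at r)"
      using DERIV_cmult[OF DERIV_ident, of "2*R" r] by simp
    have "(c has_real_derivative ((2 * r) * (2 * R * r) - (r\<^sup>2 + rb\<^sup>2) * (2 * R)) / ((2 * R * r) * (2 * R * r))) (at r)"
      unfolding c_def using R0 r0 by (intro DERIV_divide d1 d2) auto
    moreover have "((2 * r) * (2 * R * r) - (r\<^sup>2 + rb\<^sup>2) * (2 * R)) / ((2 * R * r) * (2 * R * r)) = (r\<^sup>2 - rb\<^sup>2) / (2 * R * r\<^sup>2)"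
      using R0 r0 by (simp add: field_simps power2_eq_square)
    ultimately show ?thesis by simp
  qed
  have da: "(arccos has_real_derivative inverse (- sqrt (1 - (c r)\<^sup>2))) (at (c r))"
    using cb by (intro DERIV_arccos) auto
  have "((\<lambda>r'. arccos (c r')) has_real_derivative inverse (- sqrt (1 - (c r)\<^sup>2)) * ((r\<^sup>2 - rb\<^sup>2) / (2 * R * r\<^sup>2))) (at r)"
    by (rule DERIV_chain2[OF da dc])
  hence "((\<lambda>r'. arccos (c r')) has_real_derivative (- (1 / sin (theta N \<tau> \<beta> n x ybar r)) * ((r\<^sup>2 - rb\<^sup>2) / (2 * R * r\<^sup>2)))) (at r)"
    unfolding sn by (simp add: inverse_eq_divide)
  thus "(theta N \<tau> \<beta> n x ybar has_real_derivative
           (- (1 / sin (theta N \<tau> \<beta> n x ybar r)) *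
              ((r\<^sup>2 - (rbar N \<tau> \<beta> n x)\<^sup>2) / (2 * Rrad N \<tau> * r\<^sup>2)))) (at r)"
    unfolding R_def rb_def
    by (rule has_field_derivative_transform_within_open[where S = "{R - s<..<R + s}"])
       (use r' th in auto)
qed



lemma e_bound:
  assumes N: "3 \<le> N"
  shows "\<bar>(real N - 1) / real N * (sqrt (2 * pi / real N) / W N) - 1\<bar> \<le> 1 / real N"
proof -
  define Wn where "Wn = W N"
  define a where "a = 1 / real N"
  define q where "q = sqrt (2 * pi / real N) / Wn"
  have Np: "0 < real N" using N by simp
  have a0: "0 \<le> a" "a \<le> 1" unfolding a_def using N by auto
  have W0: "0 < Wn" unfolding Wn_def using N by (intro W_pos) simp
  have lb: "2*pi/(real N + 1) \<le> Wn\<^sup>2" and ub: "Wn\<^sup>2 \<le> 2*pi/real N"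
    unfolding Wn_def using W_bounds[of N] N by auto
  have q0: "0 \<le> q" unfolding q_def using W0 by simp
  have q2: "q\<^sup>2 = (2 * pi / real N) / Wn\<^sup>2" unfolding q_def by (simp add: power_divide)
  have "1 \<le> q\<^sup>2" unfolding q2 using ub W0 by (subst le_divide_eq_1_pos) auto
  hence q1: "1 \<le> q" using q0 power2_le_imp_le[of 1 q] by simp
  have "q\<^sup>2 \<le> (2 * pi / real N) / (2*pi/(real N + 1))" unfolding q2
    by (rule divide_left_mono) (use lb W0 Np in auto)
  also have "\<dots> = 1 + a" unfolding a_def using Np by (simp add: field_simps)
  also have "\<dots> \<le> (1 + a)\<^sup>2" using a0 by (simp add: power2_eq_square algebra_simps)
  finally have "q\<^sup>2 \<le> (1 + a)\<^sup>2" .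
  hence q3: "q \<le> 1 + a" using a0 power2_le_imp_le[of q "1 + a"] by simp
  have ea: "(real N - 1) / real N = 1 - a" unfolding a_def using Np by (simp add: field_simps)
  have "(1 - a) * 1 \<le> (1 - a) * q" using q1 a0 mult_left_mono[of 1 q "1 - a"] by simp
  moreover have "(1 - a) * q \<le> (1 - a) * (1 + a)" using q3 a0 mult_left_mono[of q "1 + a" "1 - a"] by simp
  moreover have "(1 - a) * (1 + a) = 1 - a * a" by (simp add: algebra_simps)
  moreover have "0 \<le> a * a" by simp
  ultimately have f1: "1 - a \<le> (1 - a) * q" and f2: "(1 - a) * q \<le> 1 - a * a" by auto
  have "\<bar>(1 - a) * q - 1\<bar> \<le> a" unfolding abs_le_iff
  proof (intro conjI)
    show "(1 - a) * q - 1 \<le> a" using f2 \<open>0 \<le> a * a\<close> a0 by linarith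
    show "- ((1 - a) * q - 1) \<le> a" using f1 by linarith
  qed
  thus ?thesis unfolding ea q_def Wn_def a_def .
qed

lemma powr_sq: assumes "0 < a" "3 \<le> N" shows "(a\<^sup>2) powr ((real N - 3) / 2) = a ^ (N - 3)"
proof -
  have e1: "a powr (2::real) = a\<^sup>2" using assms by simp
  have ex: "2 * ((real N - 3) / 2) = real (N - 3)" using assms by (simp add: of_nat_diff)
  have "(a\<^sup>2) powr ((real N - 3) / 2) = (a powr 2) powr ((real N - 3) / 2)"
    unfolding e1 ..
  also have "\<dots> = a powr (2 * ((real N - 3) / 2))" by (rule powr_powr)
  also have "\<dots> = a powr (real (N - 3))" unfolding ex ..
  also have "\<dots> = a ^ (N - 3)" using assms powr_realpow[of a "N-3"] by simp
  finally show ?thesis .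
qed

lemma sqrt_key: assumes "0 < \<tau>" "0 < N"
  shows "sqrt (pi * \<tau>) = sqrt (2 * real N * \<tau>) * sqrt (2 * pi / real N) / 2"
proof -
  have ex: "2 * real N * \<tau> * (2 * pi / real N) = 4 * (pi * \<tau>)" using assms by (simp add: field_simps)
  have "sqrt (2 * real N * \<tau>) * sqrt (2 * pi / real N) = sqrt (2 * real N * \<tau> * (2 * pi / real N))"
    by (rule real_sqrt_mult[symmetric])
  also have "\<dots> = sqrt (4 * (pi * \<tau>))" unfolding ex ..
  also have "\<dots> = 2 * sqrt (pi * \<tau>)" unfolding real_sqrt_mult by simp
  finally show ?thesis by simp
qed



lemma final_identity:
  assumes set: "setting N n \<tau> \<beta> x ybar"
    and r: "Rrad N \<tau> - sval N \<tau> \<beta> n x < r" "r < Rrad N \<tau> + sval N \<tau> \<beta> n x"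
  shows "(real (N-1) / real N * sin (theta N \<tau> \<beta> n x ybar r) ^ (N-2) / W N) * deriv (theta N \<tau> \<beta> n x ybar) r =
     - (1 + ((real N - 1) / real N * (sqrt (2 * pi / real N) / W N) - 1)) / (4 * sqrt (pi * \<tau>) * r\<^sup>2) *
       (r\<^sup>2 - (rbar N \<tau> \<beta> n x)\<^sup>2) *
       (1 - (r\<^sup>2 + (rbar N \<tau> \<beta> n x)\<^sup>2)\<^sup>2 / (8 * real N * \<tau> * r\<^sup>2)) powr ((real N - 3) / 2)"
proof -
  note F = setting_facts[OF set]
  note P = point_main[OF set r]
  define th where "th = theta N \<tau> \<beta> n x ybar r"
  define R where "R = Rrad N \<tau>"
  define rb where "rb = rbar N \<tau> \<beta> n x"
  define c where "c = (r\<^sup>2 + rb\<^sup>2) / (2 * R * r)"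
  define Wn where "Wn = W N"
  define q0 where "q0 = sqrt (2 * pi / real N)"
  define D0 where "D0 = r\<^sup>2 - rb\<^sup>2"
  have N3: "3 \<le> N" using F by simp
  have R0: "0 < R" unfolding R_def using F by simp
  have r0: "0 < r" using r F by linarith
  have W0: "0 < Wn" unfolding Wn_def using N3 by (intro W_pos) simp
  have q00: "0 < q0" unfolding q0_def using N3 by simp
  have th0: "0 < th" "th < pi/2" unfolding th_def using P by auto
  have sn0: "0 < sin th" using th0 by (intro sin_gt_zero) auto
  have sn: "sin th = sqrt (1 - c\<^sup>2)" unfolding th_def c_def R_def rb_def using P(5) .
  have base1: "1 - c\<^sup>2 = (sin th)\<^sup>2"
  proof -
    have "0 < 1 - c\<^sup>2" using sn sn0 by (metis real_sqrt_gt_zero real_sqrt_le_0_iff not_less)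
    thus ?thesis using sn by simp
  qed
  have R2: "R\<^sup>2 = 2 * real N * \<tau>" unfolding R_def using F by simp
  have base2: "(r\<^sup>2 + rb\<^sup>2)\<^sup>2 / (8 * real N * \<tau> * r\<^sup>2) = c\<^sup>2"
  proof -
    have "(2 * R * r)\<^sup>2 = 8 * real N * \<tau> * r\<^sup>2" using R2 by (simp add: power_mult_distrib)
    thus ?thesis unfolding c_def by (simp add: power_divide)
  qed
  have pw: "(1 - (r\<^sup>2 + rb\<^sup>2)\<^sup>2 / (8 * real N * \<tau> * r\<^sup>2)) powr ((real N - 3) / 2) = sin th ^ (N - 3)"
    unfolding base2 base1 using powr_sq[OF sn0 N3] .
  have dv: "deriv (theta N \<tau> \<beta> n x ybar) r = - (1 / sin th) * (D0 / (2 * R * r\<^sup>2))"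
    unfolding th_def D0_def R_def rb_def by (rule DERIV_imp_deriv[OF P(2)])
  have sp: "sin th ^ (N - 2) = sin th ^ (N - 3) * sin th"
  proof -
    have "N - 2 = Suc (N - 3)" using N3 by simp
    thus ?thesis by simp
  qed
  have Nr: "real (N - 1) = real N - 1" using N3 by simp
  have key: "sqrt (pi * \<tau>) = R * q0 / 2" unfolding R_def Rrad_def q0_def using sqrt_key[of \<tau> N] F N3 by simp
  have "(real (N-1) / real N * sin th ^ (N-2) / Wn) * (- (1 / sin th) * (D0 / (2 * R * r\<^sup>2))) =
     - (1 + ((real N - 1) / real N * (q0 / Wn) - 1)) / (4 * (R * q0 / 2) * r\<^sup>2) * D0 * sin th ^ (N - 3)"
    unfolding sp Nr using sn0 W0 R0 r0 q00 N3 by (simp add: field_simps)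
  thus ?thesis unfolding dv pw[unfolded rb_def] key[symmetric] th_def[symmetric]
    by (simp add: D0_def rb_def R_def Wn_def q0_def)
qed



theorem lemma4p4:
  shows "(\<forall>N n \<tau> \<beta> x ybar r.
            setting N n \<tau> \<beta> x ybar \<and>
            Rrad N \<tau> - sval N \<tau> \<beta> n x < r \<and> r < Rrad N \<tau> + sval N \<tau> \<beta> n x \<longrightarrow>
              cos (theta N \<tau> \<beta> n x ybar r) =
                (r\<^sup>2 + (rbar N \<tau> \<beta> n x)\<^sup>2) / (2 * Rrad N \<tau> * r) \<and>
              (theta N \<tau> \<beta> n x ybar has_real_derivative
                 (- (1 / sin (theta N \<tau> \<beta> n x ybar r)) *
                    ((r\<^sup>2 - (rbar N \<tau> \<beta> n x)\<^sup>2) / (2 * Rrad N \<tau> * r\<^sup>2)))) (at r) \<and>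
              0 < hfun N \<tau> \<beta> n x ybar r)
       \<and> (\<forall>N n \<tau> \<beta> x ybar.
            setting N n \<tau> \<beta> x ybar \<longrightarrow>
              hfun N \<tau> \<beta> n x ybar (Rrad N \<tau> - sval N \<tau> \<beta> n x) = 0 \<and>
              hfun N \<tau> \<beta> n x ybar (Rrad N \<tau> + sval N \<tau> \<beta> n x) = 0)
       \<and> (\<exists>C. \<forall>N n \<tau> \<beta> x ybar r.
            setting N n \<tau> \<beta> x ybar \<and>
            Rrad N \<tau> - sval N \<tau> \<beta> n x < r \<and> r < Rrad N \<tau> + sval N \<tau> \<beta> n x \<longrightarrow>
              (\<exists>e g. \<bar>e\<bar> \<le> C / real N \<and>
                 (sph_frac N has_real_derivative g) (at (theta N \<tau> \<beta> n x ybar r)) \<and>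
                 g * deriv (theta N \<tau> \<beta> n x ybar) r =
                   - (1 + e) / (4 * sqrt (pi * \<tau>) * r\<^sup>2) * (r\<^sup>2 - (rbar N \<tau> \<beta> n x)\<^sup>2) *
                     (1 - (r\<^sup>2 + (rbar N \<tau> \<beta> n x)\<^sup>2)\<^sup>2 / (8 * real N * \<tau> * r\<^sup>2))
                       powr ((real N - 3) / 2)))"
proof (intro conjI)
  show "\<forall>N n \<tau> \<beta> x ybar r.
            setting N n \<tau> \<beta> x ybar \<and>
            Rrad N \<tau> - sval N \<tau> \<beta> n x < r \<and> r < Rrad N \<tau> + sval N \<tau> \<beta> n x \<longrightarrow>
              cos (theta N \<tau> \<beta> n x ybar r) =
                (r\<^sup>2 + (rbar N \<tau> \<beta> n x)\<^sup>2) / (2 * Rrad N \<tau> * r) \<and>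
              (theta N \<tau> \<beta> n x ybar has_real_derivative
                 (- (1 / sin (theta N \<tau> \<beta> n x ybar r)) *
                    ((r\<^sup>2 - (rbar N \<tau> \<beta> n x)\<^sup>2) / (2 * Rrad N \<tau> * r\<^sup>2)))) (at r) \<and>
              0 < hfun N \<tau> \<beta> n x ybar r"
  proof (intro allI impI conjI)
    fix N n \<tau> \<beta> x ybar r
    assume a: "setting N n \<tau> \<beta> x ybar \<and>
            Rrad N \<tau> - sval N \<tau> \<beta> n x < r \<and> r < Rrad N \<tau> + sval N \<tau> \<beta> n x"
    hence set: "setting N n \<tau> \<beta> x ybar" and r: "Rrad N \<tau> - sval N \<tau> \<beta> n x < r" "r < Rrad N \<tau> + sval N \<tau> \<beta> n x"
      by auto
    note P = point_main[OF set r]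
    note F = setting_facts[OF set]
    show "cos (theta N \<tau> \<beta> n x ybar r) = (r\<^sup>2 + (rbar N \<tau> \<beta> n x)\<^sup>2) / (2 * Rrad N \<tau> * r)"
      by (rule P(1))
    show "(theta N \<tau> \<beta> n x ybar has_real_derivative
                 (- (1 / sin (theta N \<tau> \<beta> n x ybar r)) *
                    ((r\<^sup>2 - (rbar N \<tau> \<beta> n x)\<^sup>2) / (2 * Rrad N \<tau> * r\<^sup>2)))) (at r)"
      by (rule P(2))
    have r0: "0 < r" using r F by linarith
    have "0 < sph_frac N (theta N \<tau> \<beta> n x ybar r)" using F P by (intro sph_frac_pos) auto
    thus "0 < hfun N \<tau> \<beta> n x ybar r" unfolding hfun_def using r0 by simp
  qed
  show "\<forall>N n \<tau> \<beta> x ybar.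
            setting N n \<tau> \<beta> x ybar \<longrightarrow>
              hfun N \<tau> \<beta> n x ybar (Rrad N \<tau> - sval N \<tau> \<beta> n x) = 0 \<and>
              hfun N \<tau> \<beta> n x ybar (Rrad N \<tau> + sval N \<tau> \<beta> n x) = 0"
  proof (intro allI impI conjI)
    fix N n \<tau> \<beta> x ybar
    assume set: "setting N n \<tau> \<beta> x ybar"
    note F = setting_facts[OF set]
    define R where "R = Rrad N \<tau>"
    define s where "s = sval N \<tau> \<beta> n x"
    define rb where "rb = rbar N \<tau> \<beta> n x"
    have R0: "0 < R" and s0: "0 \<le> s" and sR: "s < R" and rb2: "rb\<^sup>2 = R\<^sup>2 - s\<^sup>2" and N2: "2 \<le> N"
      using F unfolding R_def s_def rb_def by auto
    have "theta N \<tau> \<beta> n x ybar (R - s) = arccos (((R - s)\<^sup>2 + rb\<^sup>2) / (2 * R * (R - s)))"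
      using theta_eq[OF set, of "R - s"] s0 unfolding R_def s_def rb_def by simp
    also have "((R - s)\<^sup>2 + rb\<^sup>2) / (2 * R * (R - s)) = 1"
      using R0 sR rb2 by (simp add: field_simps power2_eq_square)
    finally have t1: "theta N \<tau> \<beta> n x ybar (R - s) = 0" by simp
    have "theta N \<tau> \<beta> n x ybar (R + s) = arccos (((R + s)\<^sup>2 + rb\<^sup>2) / (2 * R * (R + s)))"
      using theta_eq[OF set, of "R + s"] s0 unfolding R_def s_def rb_def by simp
    also have "((R + s)\<^sup>2 + rb\<^sup>2) / (2 * R * (R + s)) = 1"
    proof -
      have Rs: "0 < 2 * R * (R + s)" using R0 s0 by simp
      have "(R + s)\<^sup>2 + rb\<^sup>2 = 2 * R * (R + s)" using rb2 by (simp add: power2_eq_square algebra_simps)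
      thus ?thesis using Rs R0 s0 by simp
    qed
    finally have t2: "theta N \<tau> \<beta> n x ybar (R + s) = 0" by simp
    show "hfun N \<tau> \<beta> n x ybar (Rrad N \<tau> - sval N \<tau> \<beta> n x) = 0"
      using t1 sph_frac_0[OF N2] unfolding hfun_def R_def s_def by simp
    show "hfun N \<tau> \<beta> n x ybar (Rrad N \<tau> + sval N \<tau> \<beta> n x) = 0"
      using t2 sph_frac_0[OF N2] unfolding hfun_def R_def s_def by simp
  qed
  show "\<exists>C. \<forall>N n \<tau> \<beta> x ybar r.
            setting N n \<tau> \<beta> x ybar \<and>
            Rrad N \<tau> - sval N \<tau> \<beta> n x < r \<and> r < Rrad N \<tau> + sval N \<tau> \<beta> n x \<longrightarrow>
              (\<exists>e g. \<bar>e\<bar> \<le> C / real N \<and>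
                 (sph_frac N has_real_derivative g) (at (theta N \<tau> \<beta> n x ybar r)) \<and>
                 g * deriv (theta N \<tau> \<beta> n x ybar) r =
                   - (1 + e) / (4 * sqrt (pi * \<tau>) * r\<^sup>2) * (r\<^sup>2 - (rbar N \<tau> \<beta> n x)\<^sup>2) *
                     (1 - (r\<^sup>2 + (rbar N \<tau> \<beta> n x)\<^sup>2)\<^sup>2 / (8 * real N * \<tau> * r\<^sup>2))
                       powr ((real N - 3) / 2))"
  proof (rule exI[of _ 1], intro allI impI)
    fix N n \<tau> \<beta> x ybar r
    assume a: "setting N n \<tau> \<beta> x ybar \<and>
            Rrad N \<tau> - sval N \<tau> \<beta> n x < r \<and> r < Rrad N \<tau> + sval N \<tau> \<beta> n x"
    hence set: "setting N n \<tau> \<beta> x ybar" and r: "Rrad N \<tau> - sval N \<tau> \<beta> n x < r" "r < Rrad N \<tau> + sval N \<tau> \<beta> n x"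
      by auto
    note P = point_main[OF set r]
    note F = setting_facts[OF set]
    have N3: "3 \<le> N" using F by simp
    show "\<exists>e g. \<bar>e\<bar> \<le> 1 / real N \<and>
                 (sph_frac N has_real_derivative g) (at (theta N \<tau> \<beta> n x ybar r)) \<and>
                 g * deriv (theta N \<tau> \<beta> n x ybar) r =
                   - (1 + e) / (4 * sqrt (pi * \<tau>) * r\<^sup>2) * (r\<^sup>2 - (rbar N \<tau> \<beta> n x)\<^sup>2) *
                     (1 - (r\<^sup>2 + (rbar N \<tau> \<beta> n x)\<^sup>2)\<^sup>2 / (8 * real N * \<tau> * r\<^sup>2))
                       powr ((real N - 3) / 2)"
    proof -
      have h1: "\<bar>(real N - 1) / real N * (sqrt (2 * pi / real N) / W N) - 1\<bar> \<le> 1 / real N"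
        by (rule e_bound[OF N3])
      have h2: "(sph_frac N has_real_derivative (real (N-1) / real N * sin (theta N \<tau> \<beta> n x ybar r) ^ (N-2) / W N))
              (at (theta N \<tau> \<beta> n x ybar r))"
        using N3 P by (intro sph_frac_deriv) auto
      have h3: "(real (N-1) / real N * sin (theta N \<tau> \<beta> n x ybar r) ^ (N-2) / W N) * deriv (theta N \<tau> \<beta> n x ybar) r =
     - (1 + ((real N - 1) / real N * (sqrt (2 * pi / real N) / W N) - 1)) / (4 * sqrt (pi * \<tau>) * r\<^sup>2) *
       (r\<^sup>2 - (rbar N \<tau> \<beta> n x)\<^sup>2) *
       (1 - (r\<^sup>2 + (rbar N \<tau> \<beta> n x)\<^sup>2)\<^sup>2 / (8 * real N * \<tau> * r\<^sup>2)) powr ((real N - 3) / 2)"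
        by (rule final_identity[OF set r])
      show ?thesis using h1 h2 h3 by blast
    qed
  qed
qed


end
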